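(* Let $N>2$, $1<p<N$, $a>0$, and assume (H1)–(H4). Suppose $v_a$ solves $$(|v'(t)|^{p-2}v'(t))'+h(t)f(v(t))=0,\qquad v(0)=0,\ v'(0)=a$$ on $[0,z]$ where $0<z<T$. If $v_a(z)=0$, then $v_a'(z)\neq 0$.
   Context: Standing hypotheses. $f:\mathbb{R}\setminus\{0\}\to\mathbb{R}$ is odd and locally Lipschitz, and: (H1) there is a locally Lipschitz $g_1:\mathbb{R}\to\mathbb{R}$ and $l>p-1$ with $f(u)=|u|^{l-1}u+g_1(u)$ for all large $|u|$, and $\lim_{u\to\infty}|g_1(u)|/|u|^l=0$; (H2) there is a locally Lipschitz $g_2:\mathbb{R}\to\mathbb{R}$ with $g_2(0)=0$ and $0<m<1$ such that $f(u)=-\frac{1}{|u|^{m-1}u}+g_2(u)$ for all small $|u|\neq 0$; (H3) $f$ has a unique positive zero $\beta$, with $f<0$ on $(0,\beta)$ and $f>0$ on $(\beta,\infty)$; (H4) $K>0$ and $K'$ are continuous on $[R,\infty)$ (for a fixed $R>0$), $\frac{rK'(r)}{K(r)}>-\frac{(N-1)p}{p-1}$ on $[R,\infty)$, and there are constants $K_0,K_1>0$ with $\frac{K_0}{r^{\alpha}}\le K(r)\le \frac{K_1}{r^{\alpha_1}}$ on $[R,\infty)$, where $N+\frac{m(N-p)}{p-1}<\alpha_1\le\alpha<2(N-1)$. Notation: $T=R^{\frac{p-N}{p-1}}$ and, for $0<t\le T$, $h(t)=\left(\frac{N-p}{p-1}\right)^{-p}t^{\frac{p(N-1)}{p-N}}K\!\left(t^{\frac{p-1}{p-N}}\right)>0$.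 A solution of the initial value problem on an interval $[0,d]$ means $v\in C^1[0,d]$ such that $t\mapsto h(t)f(v(t))$ is integrable on $(0,t)$ for each $t\le d$ and $|v'(t)|^{p-2}v'(t)=a^{p-1}-\int_0^t h(s)f(v(s))\,ds$, $v(0)=0$. *)

theory Defs
  imports "HOL-Analysis.Analysis"
begin

definition loc_lipschitz_on :: "real set \<Rightarrow> (real \<Rightarrow> real) \<Rightarrow> bool" where
  "loc_lipschitz_on S g \<longleftrightarrow>
     (\<forall>x\<in>S. \<exists>e>0. \<exists>L. L-lipschitz_on (cball x e \<inter> S) g)"

definition Tconst :: "nat \<Rightarrow> real \<Rightarrow> real \<Rightarrow> real" where
  "Tconst N p R = R powr ((p - real N) / (p - 1))"

definition hfun :: "nat \<Rightarrow> real \<Rightarrow> (real \<Rightarrow> real) \<Rightarrow> real \<Rightarrow> real" where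
  "hfun N p K t =
     ((real N - p) / (p - 1)) powr (- p) * t powr (p * (real N - 1) / (p - real N))
       * K (t powr ((p - 1) / (p - real N)))"

definition ivp_solution ::
  "nat \<Rightarrow> real \<Rightarrow> (real \<Rightarrow> real) \<Rightarrow> (real \<Rightarrow> real) \<Rightarrow> real \<Rightarrow> real
     \<Rightarrow> (real \<Rightarrow> real) \<Rightarrow> (real \<Rightarrow> real) \<Rightarrow> bool" where
  "ivp_solution N p K f a d v v' \<longleftrightarrow>
     (\<forall>t\<in>{0..d}. (v has_real_derivative v' t) (at t within {0..d})) \<and>
     continuous_on {0..d} v' \<and>
     v 0 = 0 \<and>
     (\<forall>t\<in>{0..d}.
        set_integrable lborel {0<..<t} (\<lambda>s. hfun N p K s * f (v s)) \<and>
        \<bar>v' t\<bar> powr (p - 2) * v' t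
          = a powr (p - 1) - (LINT s:{0<..<t}|lborel. hfun N p K s * f (v s)))"

end

theory Submission
  imports Defs
begin

lemma loc_lip_isCont:
  assumes "loc_lipschitz_on S g" "open S" "x \<in> S"
  shows "isCont g x"
proof -
  obtain e L where e: "e > 0" and L: "L-lipschitz_on (cball x e \<inter> S) g"
    using assms unfolding loc_lipschitz_on_def by blast
  have "continuous_on (cball x e \<inter> S) g" using L by (rule lipschitz_on_continuous_on)
  moreover have "x \<in> interior (cball x e \<inter> S)"
  proof -
    have "ball x e \<inter> S \<subseteq> cball x e \<inter> S" by auto
    moreover have "open (ball x e \<inter> S)" using assms(2) by auto
    moreover have "x \<in> ball x e \<inter> S" using e assms(3) by auto
    ultimately show ?thesis by (meson interior_maximal subsetD)
  qed
  ultimately show ?thesis by (rule continuous_on_interior)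
qed

lemma abs_powr_deriv:
  fixes q :: real assumes q: "q > 1"
  shows "((\<lambda>y. \<bar>y\<bar> powr q) has_real_derivative q * \<bar>y\<bar> powr (q-1) * sgn y) (at y)"
proof (cases "y = 0")
  case True
  have lim: "((\<lambda>x. \<bar>x\<bar> powr (q-1)) \<longlongrightarrow> 0) (at 0)"
  proof -
    have "isCont (\<lambda>x. \<bar>x\<bar> powr (q-1)) 0"
      using q by (intro continuous_intros) auto
    then show ?thesis by (simp add: isCont_def)
  qed
  have "((\<lambda>x. (\<bar>x\<bar> powr q - \<bar>0\<bar> powr q) / (x - 0)) \<longlongrightarrow> 0) (at 0)"
  proof -
    have "((\<lambda>x. \<bar>(\<bar>x\<bar> powr q - \<bar>0\<bar> powr q) / (x - 0)\<bar>) \<longlongrightarrow> 0) (at 0)"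
    proof (rule Lim_transform_eventually[OF lim])
      show "\<forall>\<^sub>F x in at 0. \<bar>x\<bar> powr (q - 1) = \<bar>(\<bar>x\<bar> powr q - \<bar>0\<bar> powr q) / (x - 0)\<bar>"
        unfolding eventually_at_filter
      proof (intro always_eventually allI impI)
        fix x :: real assume "x \<noteq> 0"
        then have "\<bar>x\<bar> powr q = \<bar>x\<bar> powr (q-1) * \<bar>x\<bar>"
          by (simp add: powr_diff)
        then show "\<bar>x\<bar> powr (q - 1) = \<bar>(\<bar>x\<bar> powr q - \<bar>0\<bar> powr q) / (x - 0)\<bar>"
          using \<open>x \<noteq> 0\<close> by (simp add: abs_divide)
      qed
    qed
    then show ?thesis by (simp only: tendsto_rabs_zero_iff)
  qed
  then show ?thesis using True by (simp add: has_field_derivative_iff)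
next
  case False
  show ?thesis
  proof (cases "y > 0")
    case True
    have d: "((\<lambda>y. y powr q) has_real_derivative q * y powr (q-1)) (at y)"
      using True by (rule has_real_derivative_powr)
    show ?thesis
    proof (rule has_field_derivative_transform_within_open[where S="{0<..}"])
      show "((\<lambda>y. y powr q) has_real_derivative q * \<bar>y\<bar> powr (q - 1) * sgn y) (at y)"
        using d True by simp
    qed (use True in auto)
  next
    case neg: False
    with False have y: "y < 0" by auto
    have d: "((\<lambda>y. y powr q) has_real_derivative q * (-y) powr (q-1)) (at (-y))"
      using y by (intro has_real_derivative_powr) auto
    have d2: "((\<lambda>y. (-y) powr q) has_real_derivative q * (-y) powr (q-1) * (-1)) (at y)"
    proof -
      have m: "((\<lambda>y. -y) has_real_derivative (-1)) (at y)" by (auto intro!: derivative_eq_intros)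
      from DERIV_chain2[of "\<lambda>y. y powr q" _ "\<lambda>y. -y", OF _ m] d show ?thesis by simp
    qed
    show ?thesis
    proof (rule has_field_derivative_transform_within_open[where S="{..<0}"])
      show "((\<lambda>y. (-y) powr q) has_real_derivative q * \<bar>y\<bar> powr (q - 1) * sgn y) (at y)"
        using d2 y by simp
    qed (use y in auto)
  qed
qed

lemma mono_finite_exc:
  fixes E E' :: "real \<Rightarrow> real"
  assumes ab: "a \<le> b" and cont: "continuous_on {a..b} E" and fin: "finite S"
    and der: "\<And>x. x \<in> {a<..<b} - S \<Longrightarrow> (E has_real_derivative E' x) (at x)"
    and nn: "\<And>x. x \<in> {a<..<b} - S \<Longrightarrow> E' x \<ge> 0"
  shows "E a \<le> E b"
proof -
  define E'' where "E'' x = (if x \<in> {a<..<b} - S then E' x else 0)" for x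
  have "(E'' has_integral (E b - E a)) {a..b}"
  proof (rule fundamental_theorem_of_calculus_interior_strong[OF fin ab _ cont])
    fix x assume "x \<in> {a<..<b} - S"
    then show "(E has_vector_derivative E'' x) (at x)"
      using der[of x] by (simp add: E''_def has_real_derivative_iff_has_vector_derivative)
  qed
  moreover have "\<And>x. x \<in> {a..b} \<Longrightarrow> 0 \<le> E'' x" using nn by (simp add: E''_def)
  ultimately have "0 \<le> E b - E a" by (rule has_integral_nonneg)
  then show ?thesis by simp
qed

lemma finite_zeros:
  fixes v :: "real \<Rightarrow> real"
  assumes cont: "continuous_on {c..d} v"
    and der: "\<And>x. x \<in> {c..d} \<Longrightarrow> v x = 0 \<Longrightarrow> \<exists>D. (v has_real_derivative D) (at x) \<and> D \<noteq> 0"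
  shows "finite {x\<in>{c..d}. v x = 0}"
proof (rule ccontr)
  let ?Z = "{x\<in>{c..d}. v x = 0}"
  assume inf: "infinite ?Z"
  have "closed ?Z" using cont by (rule continuous_closed_preimage_constant) auto
  then have "compact ?Z" unfolding compact_eq_bounded_closed by (auto intro: bounded_subset[of "{c..d}"])
  then obtain x where x: "x \<in> ?Z" "x islimpt ?Z"
    using inf unfolding compact_eq_Bolzano_Weierstrass by blast
  obtain D where D: "(v has_real_derivative D) (at x)" "D \<noteq> 0" using der x(1) by blast
  have "((\<lambda>y. (v y - v x) / (y - x)) \<longlongrightarrow> D) (at x)"
    using D(1) by (simp add: has_field_derivative_iff)
  then have "\<forall>\<^sub>F y in at x. (v y - v x) / (y - x) \<noteq> 0"
    using D(2) by (rule tendsto_imp_eventually_ne)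
  then have "\<forall>\<^sub>F y in at x. y \<notin> ?Z"
    by eventually_elim (use x(1) in auto)
  then show False using x(2) by (simp add: islimpt_iff_eventually)
qed

lemma mono_finite_exc_ex:
  fixes E :: "real \<Rightarrow> real"
  assumes ab: "a \<le> b" and cont: "continuous_on {a..b} E" and fin: "finite S"
    and der: "\<And>x. x \<in> {a<..<b} - S \<Longrightarrow> \<exists>D. (E has_real_derivative D) (at x) \<and> D \<ge> 0"
  shows "E a \<le> E b"
proof -
  define E' where "E' x = (SOME D. (E has_real_derivative D) (at x) \<and> D \<ge> 0)" for x
  have *: "(E has_real_derivative E' x) (at x) \<and> E' x \<ge> 0" if "x \<in> {a<..<b} - S" for x
    unfolding E'_def using der[OF that] by (rule someI_ex)
  show ?thesis
    by (rule mono_finite_exc[OF ab cont fin, of E']) (use * in auto)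
qed

lemma f_integrable_0:
  fixes f :: "real \<Rightarrow> real"
  assumes fc: "\<And>u. u \<noteq> 0 \<Longrightarrow> isCont f u"
    and m: "0 < m" "m < 1" and B: "B \<ge> 0" and d: "\<delta> > 0"
    and bnd: "\<And>u. 0 < u \<Longrightarrow> u < \<delta> \<Longrightarrow> \<bar>f u\<bar> \<le> u powr (-m) + B"
    and x: "0 < x" "x < \<delta>"
  shows "f integrable_on {0..x}" "\<bar>integral {0..x} f\<bar> \<le> x powr (1-m) / (1-m) + B * x"
proof -
  have gi: "((\<lambda>u. u powr (-m) + B) has_integral (x powr (1-m) / (1-m) + B * x)) {0..x}"
  proof -
    have "((\<lambda>u. u powr (-m)) has_integral (x powr (-m+1) / (-m+1))) {0..x}"
      using m x by (intro has_integral_powr_from_0) auto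
    then have "((\<lambda>u. u powr (-m)) has_integral (x powr (1-m) / (1-m))) {0..x}"
      by (simp add: add.commute)
    moreover have "((\<lambda>u. B) has_integral (B * x)) {0..x}"
      using has_integral_const_real[of B 0 x] x by (simp add: mult.commute)
    ultimately show ?thesis by (rule has_integral_add)
  qed
  then have gi': "(\<lambda>u. u powr (-m) + B) integrable_on {0<..<x}"
    using integrable_on_open_interval_real by blast
  have "continuous_on {0<..<x} f" using fc by (intro continuous_at_imp_continuous_on) auto
  then have meas: "f \<in> borel_measurable (lebesgue_on {0<..<x})"
    by (rule continuous_imp_measurable_on_sets_lebesgue) auto
  have fi: "f integrable_on {0<..<x}"
    by (rule measurable_bounded_by_integrable_imp_integrable_real[OF meas gi']) (use bnd x in auto)
  then show "f integrable_on {0..x}" using integrable_on_open_interval_real by blast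
  have "\<bar>integral {0<..<x} f\<bar> \<le> integral {0<..<x} (\<lambda>u. u powr (-m) + B)"
  proof -
    have "norm (integral {0<..<x} f) \<le> integral {0<..<x} (\<lambda>u. u powr (-m) + B)"
    proof (rule integral_norm_bound_integral[OF fi gi'])
      fix u assume "u \<in> {0<..<x}"
      then show "norm (f u) \<le> u powr (-m) + B" using bnd[of u] x by simp
    qed
    then show ?thesis by simp
  qed
  also have "\<dots> = x powr (1-m) / (1-m) + B * x"
    using gi by (simp add: integral_open_interval_real[symmetric] integral_unique)
  finally show "\<bar>integral {0..x} f\<bar> \<le> x powr (1-m) / (1-m) + B * x"
    by (simp add: integral_open_interval_real)
qed

lemma f_integrable_all:
  fixes f :: "real \<Rightarrow> real"
  assumes fc: "\<And>u. u \<noteq> 0 \<Longrightarrow> isCont f u"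
    and m: "0 < m" "m < 1" and B: "B \<ge> 0" and d: "\<delta> > 0"
    and bnd: "\<And>u. 0 < u \<Longrightarrow> u < \<delta> \<Longrightarrow> \<bar>f u\<bar> \<le> u powr (-m) + B"
    and x: "0 \<le> x"
  shows "f integrable_on {0..x}"
proof (cases "x < \<delta>")
  case True
  show ?thesis
  proof (cases "x = 0")
    case True then show ?thesis using integrable_on_refl[where f=f and a="0::real"] by simp
  next
    case False
    then show ?thesis using f_integrable_0[OF fc m B d bnd, where x=x] x True by auto
  qed
next
  case False
  have "f integrable_on {0..\<delta>/2}" using f_integrable_0[OF fc m B d bnd, where x="\<delta>/2"] d by auto
  moreover have "f integrable_on {\<delta>/2..x}"
    by (rule integrable_continuous_interval, rule continuous_at_imp_continuous_on) (use fc d in auto)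
  ultimately show ?thesis
    by (rule Henstock_Kurzweil_Integration.integrable_combine[rotated 2]) (use False d in auto)
qed

lemma primitive_props:
  fixes f :: "real \<Rightarrow> real"
  assumes fc: "\<And>u. u \<noteq> 0 \<Longrightarrow> isCont f u"
    and odd: "\<And>u. u \<noteq> 0 \<Longrightarrow> f (-u) = - f u"
    and m: "0 < m" "m < 1" and B: "B \<ge> 0" and d: "\<delta> > 0"
    and bnd: "\<And>u. 0 < u \<Longrightarrow> u < \<delta> \<Longrightarrow> \<bar>f u\<bar> \<le> u powr (-m) + B"
  defines "F \<equiv> \<lambda>u. integral {0..\<bar>u\<bar>} f"
  shows "F 0 = 0"
    and "\<And>u. u \<noteq> 0 \<Longrightarrow> (F has_real_derivative f u) (at u)"
    and "\<And>u. \<bar>u\<bar> < \<delta> \<Longrightarrow> \<bar>F u\<bar> \<le> (1/(1-m) + B * \<delta> powr m) * \<bar>u\<bar> powr (1-m)"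
    and "\<And>u. isCont F u"
proof -
  show F0: "F 0 = 0" by (simp add: F_def)
  define G where "G = (\<lambda>u. integral {0..u} f)"
  have Gd: "(G has_real_derivative f u) (at u)" if u: "u > 0" for u
  proof -
    have int: "f integrable_on {0..2*u}" using f_integrable_all[OF fc m B d bnd, where x="2*u"] u by simp
    have "(G has_vector_derivative f u) (at u within ({0..2*u} - {}))"
      unfolding G_def
      by (rule integral_has_vector_derivative_continuous_at[OF int])
         (use u fc[of u] in \<open>auto intro: continuous_at_imp_continuous_at_within\<close>)
    moreover have "at u within ({0..2*u} - {}) = at u"
      using u by (intro at_within_interior) auto
    ultimately show ?thesis by (simp add: has_real_derivative_iff_has_vector_derivative)
  qed
  show Fd: "(F has_real_derivative f u) (at u)" if u: "u \<noteq> 0" for u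
  proof (cases "u > 0")
    case True
    show ?thesis
      by (rule has_field_derivative_transform_within_open[OF Gd[OF True], of "{0<..}"])
         (use True in \<open>auto simp: F_def G_def\<close>)
  next
    case False
    with u have u': "u < 0" by auto
    have m1: "((\<lambda>y. -y) has_real_derivative (-1)) (at u)" by (auto intro!: derivative_eq_intros)
    have "((\<lambda>y. G (-y)) has_real_derivative f (-u) * (-1)) (at u)"
      using DERIV_chain2[of G _ "\<lambda>y. -y", OF _ m1] Gd[of "-u"] u' by simp
    then have "((\<lambda>y. G (-y)) has_real_derivative f u) (at u)" using odd[of u] u by simp
    then show ?thesis
      by (rule has_field_derivative_transform_within_open[of _ _ _ "{..<0}"])
         (use u' in \<open>auto simp: F_def G_def\<close>)
  qed
  show Fb: "\<bar>F u\<bar> \<le> (1/(1-m) + B * \<delta> powr m) * \<bar>u\<bar> powr (1-m)" if u: "\<bar>u\<bar> < \<delta>" for u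
  proof (cases "u = 0")
    case True then show ?thesis by (simp add: F0)
  next
    case False
    let ?x = "\<bar>u\<bar>"
    have x: "0 < ?x" "?x < \<delta>" using False u by auto
    have "\<bar>F u\<bar> \<le> ?x powr (1-m) / (1-m) + B * ?x"
      using f_integrable_0(2)[OF fc m B d bnd x] by (simp add: F_def)
    also have "B * ?x \<le> B * \<delta> powr m * ?x powr (1-m)"
    proof -
      have "?x = ?x powr m * ?x powr (1-m)" using x by (simp add: powr_add[symmetric])
      also have "\<dots> \<le> \<delta> powr m * ?x powr (1-m)"
        using x m by (intro mult_right_mono powr_mono2) auto
      finally show ?thesis using B by (simp add: mult_left_mono mult.assoc)
    qed
    finally show ?thesis by (simp add: algebra_simps)
  qed
  show "isCont F u" for u
  proof (cases "u = 0")
    case False show ?thesis using Fd[OF False] by (rule DERIV_isCont)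
  next
    case True
    let ?C = "1/(1-m) + B * \<delta> powr m"
    have "((\<lambda>y. ?C * \<bar>y\<bar> powr (1-m)) \<longlongrightarrow> ?C * \<bar>0\<bar> powr (1-m)) (at 0)"
      using m by (intro tendsto_intros) auto
    then have lim: "((\<lambda>y. ?C * \<bar>y\<bar> powr (1-m)) \<longlongrightarrow> 0) (at 0)" by simp
    have ev: "\<forall>\<^sub>F y in at 0. norm (F y) \<le> ?C * \<bar>y\<bar> powr (1-m)"
    proof -
      have "((\<lambda>y. \<bar>y\<bar>) \<longlongrightarrow> \<bar>0::real\<bar>) (at (0::real))" by (intro tendsto_intros)
      then have "\<forall>\<^sub>F y in at (0::real). \<bar>y\<bar> < \<delta>"
        using d by (intro order_tendstoD(2)) auto
      then show ?thesis by eventually_elim (use Fb in auto)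
    qed
    have "(F \<longlongrightarrow> 0) (at 0)" by (rule Lim_null_comparison[OF ev lim])
    then show ?thesis using True F0 by (simp add: isCont_def)
  qed
qed

lemma h_props:
  fixes N :: nat and p R t :: real and K K' :: "real \<Rightarrow> real"
  assumes p: "1 < p" "p < real N" and R: "R > 0"
    and K_pos: "\<forall>r\<ge>R. K r > 0"
    and K_deriv: "\<forall>r\<ge>R. (K has_real_derivative K' r) (at r within {R..})"
    and K_ratio: "\<forall>r\<ge>R. r * K' r / K r > - ((real N - 1) * p / (p - 1))"
    and t: "0 < t" "t < Tconst N p R"
  shows "t powr ((p - 1) / (p - real N)) > R"
    and "hfun N p K t > 0"
    and "\<exists>D. (hfun N p K has_real_derivative D) (at t) \<and> D < 0"
proof -
  define e1 where "e1 = p * (real N - 1) / (p - real N)"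
  define e2 where "e2 = (p - 1) / (p - real N)"
  define c0 where "c0 = ((real N - p) / (p - 1)) powr (- p)"
  define r where "r = t powr e2"
  have e2neg: "e2 < 0" using p unfolding e2_def by (simp add: divide_pos_neg)
  have c0pos: "c0 > 0" using p unfolding c0_def by simp
  have T: "Tconst N p R > 0" using R by (simp add: Tconst_def)
  have "Tconst N p R powr e2 = R"
  proof -
    have "Tconst N p R powr e2 = R powr ((p - real N) / (p - 1) * e2)"
      unfolding Tconst_def by (simp add: powr_powr)
    also have "(p - real N) / (p - 1) * e2 = 1"
    proof -
      have "p - real N \<noteq> 0" "p - 1 \<noteq> 0" using p by auto
      then show ?thesis unfolding e2_def by simp
    qed
    finally show ?thesis using R by simp
  qed
  moreover have "Tconst N p R powr e2 < t powr e2"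
    using powr_less_mono2_neg[OF e2neg t(1) t(2)] .
  ultimately have rR: "r > R" unfolding r_def by simp
  then show "t powr ((p - 1) / (p - real N)) > R" unfolding r_def e2_def .
  have hdef: "hfun N p K = (\<lambda>s. c0 * s powr e1 * K (s powr e2))"
    unfolding hfun_def c0_def e1_def e2_def by (simp add: fun_eq_iff)
  have Kr: "K r > 0" using K_pos rR by auto
  show "hfun N p K t > 0" unfolding hdef using c0pos t Kr r_def by simp
  have dK0: "(K has_real_derivative K' r) (at r)"
  proof -
    have "(K has_real_derivative K' r) (at r within {R..})" using K_deriv rR by auto
    moreover have "at r within {R..} = at r" using rR by (intro at_within_interior) simp
    ultimately show ?thesis by simp
  qed
  have dpow2: "((\<lambda>s. s powr e2) has_real_derivative e2 * t powr (e2 - 1)) (at t)"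
    using t(1) by (rule has_real_derivative_powr)
  have dK: "((\<lambda>s. K (s powr e2)) has_real_derivative K' r * (e2 * t powr (e2 - 1))) (at t)"
    using DERIV_chain2[of K "K' r" "\<lambda>s. s powr e2", OF _ dpow2] dK0 unfolding r_def by simp
  have dpow1: "((\<lambda>s. s powr e1) has_real_derivative e1 * t powr (e1 - 1)) (at t)"
    using t(1) by (rule has_real_derivative_powr)
  have d: "((\<lambda>s. c0 * s powr e1 * K (s powr e2)) has_real_derivative
            c0 * (e1 * t powr (e1 - 1)) * K (t powr e2) + K' r * (e2 * t powr (e2 - 1)) * (c0 * t powr e1)) (at t)"
    by (rule DERIV_mult[OF DERIV_cmult[OF dpow1] dK])
  define P where "P = t powr (e1 - 1)"
  have Ppos: "P > 0" using t by (simp add: P_def)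
  have eq: "c0 * (e1 * t powr (e1 - 1)) * K (t powr e2) + K' r * (e2 * t powr (e2 - 1)) * (c0 * t powr e1)
      = c0 * P * (e1 * K r + e2 * (r * K' r))"
  proof -
    have "t powr (e2 - 1) * t powr e1 = P * r"
      unfolding P_def r_def using t by (simp add: powr_add[symmetric] algebra_simps)
    then show ?thesis unfolding r_def[symmetric] P_def[symmetric] by (simp add: algebra_simps)
  qed
  have neg: "e1 * K r + e2 * (r * K' r) < 0"
  proof -
    have "r * K' r / K r > - ((real N - 1) * p / (p - 1))" using K_ratio rR by auto
    then have "r * K' r > - ((real N - 1) * p / (p - 1)) * K r" using Kr by (simp add: field_simps)
    then have "e2 * (r * K' r) < e2 * (- ((real N - 1) * p / (p - 1)) * K r)"
      using e2neg by (intro mult_strict_left_mono_neg) auto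
    also have "e2 * (- ((real N - 1) * p / (p - 1)) * K r) = - e1 * K r"
    proof -
      have "p - 1 \<noteq> 0" using p by auto
      then have "e2 * ((real N - 1) * p / (p - 1)) = e1"
        unfolding e1_def e2_def by (simp add: mult.commute)
      then show ?thesis by (metis mult.assoc mult_minus_left mult_minus_right)
    qed
    finally show ?thesis by simp
  qed
  have "c0 * P * (e1 * K r + e2 * (r * K' r)) < 0"
    using c0pos Ppos neg by (simp add: mult_pos_neg)
  then show "\<exists>D. (hfun N p K has_real_derivative D) (at t) \<and> D < 0"
    using d eq unfolding hdef by auto
qed

lemma h_bound:
  fixes N :: nat and p R t K1 \<alpha>1 :: real and K :: "real \<Rightarrow> real"
  assumes p: "1 < p" "p < real N" and t: "0 < t" and rR: "t powr ((p - 1) / (p - real N)) \<ge> R"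
    and Kb: "\<forall>r\<ge>R. K r \<le> K1 / r powr \<alpha>1"
  shows "hfun N p K t \<le> ((real N - p) / (p - 1)) powr (- p) * K1 *
            t powr ((p * (real N - 1) - \<alpha>1 * (p - 1)) / (p - real N))"
proof -
  define e1 where "e1 = p * (real N - 1) / (p - real N)"
  define e2 where "e2 = (p - 1) / (p - real N)"
  define c0 where "c0 = ((real N - p) / (p - 1)) powr (- p)"
  have c0pos: "c0 > 0" using p unfolding c0_def by simp
  have "K (t powr e2) \<le> K1 / (t powr e2) powr \<alpha>1" using Kb rR unfolding e2_def by auto
  also have "\<dots> = K1 * t powr (- (e2 * \<alpha>1))" using t by (simp add: powr_powr powr_minus divide_inverse)
  finally have Kt: "K (t powr e2) \<le> K1 * t powr (- (e2 * \<alpha>1))" .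
  have "hfun N p K t = c0 * t powr e1 * K (t powr e2)"
    unfolding hfun_def c0_def e1_def e2_def by simp
  also have "\<dots> \<le> c0 * t powr e1 * (K1 * t powr (- (e2 * \<alpha>1)))"
    using Kt c0pos t by (intro mult_left_mono) auto
  also have "\<dots> = c0 * K1 * t powr (e1 - e2 * \<alpha>1)"
    using t by (simp add: powr_add[symmetric] algebra_simps)
  also have "e1 - e2 * \<alpha>1 = (p * (real N - 1) - \<alpha>1 * (p - 1)) / (p - real N)"
    unfolding e1_def e2_def by (simp add: diff_divide_distrib[symmetric] mult.commute)
  finally show ?thesis unfolding c0_def .
qed

theorem lemma2p2:
  fixes N :: nat and p a R l m z :: real
    and f g1 g2 K K' v v' :: "real \<Rightarrow> real"
  assumes N: "N > 2" and p: "1 < p" "p < real N" and a: "a > 0"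
    (* standing: f odd and locally Lipschitz on R \ {0} *)
    and f_odd: "\<forall>u. u \<noteq> 0 \<longrightarrow> f (- u) = - f u"
    and f_lip: "loc_lipschitz_on (- {0}) f"
    (* (H1) *)
    and H1_g1: "loc_lipschitz_on UNIV g1" and H1_l: "l > p - 1"
    and H1_eq: "\<exists>U. \<forall>u. \<bar>u\<bar> \<ge> U \<longrightarrow> f u = \<bar>u\<bar> powr (l - 1) * u + g1 u"
    and H1_lim: "((\<lambda>u. \<bar>g1 u\<bar> / \<bar>u\<bar> powr l) \<longlongrightarrow> 0) at_top"
    (* (H2) *)
    and H2_g2: "loc_lipschitz_on UNIV g2" "g2 0 = 0" and H2_m: "0 < m" "m < 1"
    and H2_eq: "\<exists>\<delta>>0. \<forall>u. 0 < \<bar>u\<bar> \<and> \<bar>u\<bar> < \<delta> \<longrightarrow>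
                   f u = - (1 / (\<bar>u\<bar> powr (m - 1) * u)) + g2 u"
    (* (H3) *)
    and H3: "\<exists>\<beta>>0. f \<beta> = 0 \<and> (\<forall>u>0. f u = 0 \<longrightarrow> u = \<beta>)
                 \<and> (\<forall>u. 0 < u \<and> u < \<beta> \<longrightarrow> f u < 0) \<and> (\<forall>u>\<beta>. f u > 0)"
    (* (H4) *)
    and R: "R > 0"
    and K_pos: "\<forall>r\<ge>R. K r > 0"
    and K_deriv: "\<forall>r\<ge>R. (K has_real_derivative K' r) (at r within {R..})"
    and K_cont: "continuous_on {R..} K" and K'_cont: "continuous_on {R..} K'"
    and K_ratio: "\<forall>r\<ge>R. r * K' r / K r > - ((real N - 1) * p / (p - 1))"
    and K_bounds: "\<exists>K0 K1 \<alpha> \<alpha>1. K0 > 0 \<and> K1 > 0 \<and>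
                    real N + m * (real N - p) / (p - 1) < \<alpha>1 \<and> \<alpha>1 \<le> \<alpha> \<and> \<alpha> < 2 * (real N - 1) \<and>
                    (\<forall>r\<ge>R. K0 / r powr \<alpha> \<le> K r \<and> K r \<le> K1 / r powr \<alpha>1)"
    (* the solution *)
    and z: "0 < z" "z < Tconst N p R"
    and sol: "ivp_solution N p K f a z v v'"
    and vz: "v z = 0"
  shows "v' z \<noteq> 0"
proof
  assume v'z: "v' z = 0"
  have vd: "\<And>t. t \<in> {0..z} \<Longrightarrow> (v has_real_derivative v' t) (at t within {0..z})"
    and v'c: "continuous_on {0..z} v'" and v0: "v 0 = 0"
    and phi: "\<And>t. t \<in> {0..z} \<Longrightarrow> set_integrable lborel {0<..<t} (\<lambda>s. hfun N p K s * f (v s))"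
    and phi2: "\<And>t. t \<in> {0..z} \<Longrightarrow> \<bar>v' t\<bar> powr (p - 2) * v' t
          = a powr (p - 1) - (LINT s:{0<..<t}|lborel. hfun N p K s * f (v s))"
    using sol unfolding ivp_solution_def by auto
  define T where "T = Tconst N p R"
  have zT: "z < T" using z unfolding T_def by simp
  have vcont: "continuous_on {0..z} v" using vd by (rule DERIV_continuous_on)
  have vdat: "(v has_real_derivative v' t) (at t)" if "0 < t" "t < z" for t
    using vd[of t] that at_within_Icc_at[of 0 t z] by auto
  have fc: "isCont f u" if "u \<noteq> 0" for u
    by (rule loc_lip_isCont[OF f_lip]) (use that in auto)
  have fodd: "f (-u) = - f u" if "u \<noteq> 0" for u using f_odd that by auto
  have g2c: "isCont g2 0" by (rule loc_lip_isCont[OF H2_g2(1)]) auto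
  obtain \<delta> where \<delta>: "\<delta> > 0" "\<And>u. 0 < \<bar>u\<bar> \<Longrightarrow> \<bar>u\<bar> < \<delta> \<Longrightarrow> f u = - (1 / (\<bar>u\<bar> powr (m - 1) * u)) + g2 u"
    using H2_eq by blast
  obtain \<delta>' where \<delta>': "\<delta>' > 0" "\<And>u. \<bar>u\<bar> < \<delta>' \<Longrightarrow> \<bar>g2 u\<bar> < 1"
  proof -
    have "((\<lambda>u. \<bar>g2 u\<bar>) \<longlongrightarrow> \<bar>g2 0\<bar>) (at 0)" using g2c unfolding isCont_def by (intro tendsto_intros)
    then have "\<forall>\<^sub>F u in at 0. \<bar>g2 u\<bar> < 1" using H2_g2(2) by (intro order_tendstoD(2)) auto
    then obtain d where d: "d > 0" "\<And>u. u \<noteq> 0 \<Longrightarrow> dist u 0 < d \<Longrightarrow> \<bar>g2 u\<bar> < 1"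
      unfolding eventually_at by auto
    have "\<bar>g2 u\<bar> < 1" if "\<bar>u\<bar> < d" for u
      using d(2)[of u] that H2_g2(2) by (cases "u = 0") auto
    then show ?thesis using that d(1) by blast
  qed
  define \<delta>1 where "\<delta>1 = min \<delta> \<delta>'"
  have \<delta>1: "\<delta>1 > 0" using \<delta> \<delta>' by (simp add: \<delta>1_def)
  have fbnd: "\<bar>f u\<bar> \<le> u powr (-m) + 1" if u: "0 < u" "u < \<delta>1" for u
  proof -
    have "f u = - (1 / (\<bar>u\<bar> powr (m - 1) * u)) + g2 u" using \<delta>(2)[of u] u by (simp add: \<delta>1_def)
    also have "\<bar>u\<bar> powr (m - 1) * u = u powr m"
    proof -
      have "\<bar>u\<bar> powr (m - 1) * u = u * u powr (m - 1)" using u by simp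
      also have "\<dots> = u powr (1 + (m - 1))" using u by (intro powr_mult_base) simp
      finally show ?thesis by simp
    qed
    also have "1 / u powr m = u powr (-m)" by (simp add: powr_minus_divide)
    finally have "f u = - (u powr (-m)) + g2 u" .
    moreover have "\<bar>g2 u\<bar> < 1" using \<delta>'(2)[of u] u by (simp add: \<delta>1_def)
    ultimately show ?thesis using powr_ge_zero[of u "-m"] by arith
  qed
  define F where "F = (\<lambda>u. integral {0..\<bar>u\<bar>} f)"
  have F0: "F 0 = 0" unfolding F_def
    by (rule primitive_props(1)[of f m 1 \<delta>1]) (use fc fodd H2_m \<delta>1 fbnd in auto)
  have Fd: "(F has_real_derivative f u) (at u)" if "u \<noteq> 0" for u
    unfolding F_def
    by (rule primitive_props(2)[of f m 1 \<delta>1]) (use fc fodd H2_m \<delta>1 fbnd that in auto)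
  define CF where "CF = 1/(1-m) + 1 * \<delta>1 powr m"
  have Fb: "\<bar>F u\<bar> \<le> CF * \<bar>u\<bar> powr (1-m)" if "\<bar>u\<bar> < \<delta>1" for u
    unfolding F_def CF_def
    by (rule primitive_props(3)[of f m 1 \<delta>1]) (use fc fodd H2_m \<delta>1 fbnd that in auto)
  have Fc: "isCont F u" for u
    unfolding F_def
    by (rule primitive_props(4)[of f m 1 \<delta>1]) (use fc fodd H2_m \<delta>1 fbnd in auto)
  have CFpos: "CF > 0"
  proof -
    have A: "1 / (1 - m) > 0" using H2_m by simp
    have B: "1 * \<delta>1 powr m \<ge> 0" by simp
    show ?thesis unfolding CF_def by (rule add_pos_nonneg[OF A B])
  qed
  obtain \<beta> where \<beta>: "\<beta> > 0" "\<And>u. 0 < u \<Longrightarrow> u < \<beta> \<Longrightarrow> f u < 0"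
    using H3 by blast
  have Fneg: "F u < 0" if "u \<noteq> 0" "\<bar>u\<bar> \<le> \<beta>" for u
  proof -
    have "F \<bar>u\<bar> < F 0"
    proof (rule DERIV_neg_imp_decreasing_open[of 0 "\<bar>u\<bar>" F])
      show "0 < \<bar>u\<bar>" using that by simp
      fix x assume "0 < x" "x < \<bar>u\<bar>"
      then show "\<exists>y. (F has_real_derivative y) (at x) \<and> y < 0"
        using Fd[of x] \<beta>(2)[of x] that by auto
    next
      show "continuous_on {0..\<bar>u\<bar>} F" using Fc by (intro continuous_at_imp_continuous_on) auto
    qed
    moreover have "F u = F \<bar>u\<bar>" by (simp add: F_def)
    ultimately show ?thesis using F0 by simp
  qed
  obtain K0 K1 \<alpha> \<alpha>1 where KB0: "K0 > 0" "K1 > 0" "real N + m * (real N - p) / (p - 1) < \<alpha>1"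
     "\<alpha>1 \<le> \<alpha>" "\<alpha> < 2 * (real N - 1)" "\<forall>r\<ge>R. K0 / r powr \<alpha> \<le> K r \<and> K r \<le> K1 / r powr \<alpha>1"
    using K_bounds by blast
  have KB: "K0 > 0" "K1 > 0" "real N + m * (real N - p) / (p - 1) < \<alpha>1"
     "\<forall>r\<ge>R. K r \<le> K1 / r powr \<alpha>1" using KB0 by auto
  have hp: "hfun N p K t > 0" if "0 < t" "t < T" for t
    using h_props(2)[OF p R K_pos K_deriv K_ratio, of t] that unfolding T_def by simp
  have hD: "\<exists>D. (hfun N p K has_real_derivative D) (at t) \<and> D < 0" if "0 < t" "t < T" for t
    using h_props(3)[OF p R K_pos K_deriv K_ratio, of t] that unfolding T_def by simp
  have hr: "t powr ((p - 1) / (p - real N)) > R" if "0 < t" "t < T" for t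
    using h_props(1)[OF p R K_pos K_deriv K_ratio, of t] that unfolding T_def by simp
  have hc: "isCont (hfun N p K) t" if "0 < t" "t < T" for t
    using hD[OF that] DERIV_isCont by blast
  define e3 where "e3 = (p * (real N - 1) - \<alpha>1 * (p - 1)) / (p - real N)"
  define Ch where "Ch = ((real N - p) / (p - 1)) powr (- p) * K1"
  have hb: "hfun N p K t \<le> Ch * t powr e3" if "0 < t" "t < T" for t
    using h_bound[OF p that(1) _ KB(4)] hr[OF that] unfolding Ch_def e3_def by simp
  have Chpos: "Ch > 0" using KB(2) p by (simp add: Ch_def)
  have e3m: "e3 + 1 - m > 0"
  proof -
    have "(real N + m * (real N - p) / (p - 1)) * (p - 1) < \<alpha>1 * (p - 1)"
      using KB(3) p by (intro mult_strict_right_mono) auto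
    also have "(real N + m * (real N - p) / (p - 1)) * (p - 1) = real N * (p - 1) + m * (real N - p)"
      using p by (simp add: field_simps)
    finally have A: "real N * (p - 1) + m * (real N - p) < \<alpha>1 * (p - 1)" .
    have B: "p * (real N - 1) - \<alpha>1 * (p - 1) < (m - 1) * (p - real N)"
      using A by (simp add: algebra_simps)
    have "(m - 1) < e3"
      unfolding e3_def using B p by (simp add: neg_less_divide_eq)
    then show ?thesis by simp
  qed
  have v'0: "v' 0 \<noteq> 0"
  proof
    assume "v' 0 = 0"
    moreover have "(LINT s:{}|lborel. hfun N p K s * f (v s)) = 0"
      by (simp add: set_lebesgue_integral_def)
    ultimately have "a powr (p - 1) = 0" using phi2[of 0] z by simp
    then show False using a by simp
  qed
  define Bad where "Bad = {s\<in>{0..z}. v s = 0 \<and> v' s = 0}"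
  have Bad_eq: "Bad = ({0..z} \<inter> v -` {0}) \<inter> ({0..z} \<inter> v' -` {0})" by (auto simp: Bad_def)
  have clBad: "closed Bad" unfolding Bad_eq
    by (intro closed_Int continuous_closed_preimage vcont v'c) auto
  have zBad: "z \<in> Bad" using z vz v'z by (simp add: Bad_def)
  define s where "s = Inf Bad"
  have bddB: "bdd_below Bad" by (rule bdd_belowI[of _ 0]) (auto simp: Bad_def)
  have sBad: "s \<in> Bad" unfolding s_def using closed_contains_Inf[OF _ bddB clBad] zBad by auto
  have sz: "s \<le> z" unfolding s_def using zBad bddB by (rule cInf_lower)
  have vs: "v s = 0" and v's: "v' s = 0" and s0: "0 \<le> s" using sBad by (auto simp: Bad_def)
  have spos: "s > 0" using s0 v's v'0 by (cases "s = 0") auto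
  have nobad: "v' t \<noteq> 0" if "0 \<le> t" "t < s" "v t = 0" for t
  proof
    assume "v' t = 0"
    then have "t \<in> Bad" using that sz by (auto simp: Bad_def)
    then have "s \<le> t" unfolding s_def using bddB by (rule cInf_lower)
    then show False using that by simp
  qed
  define E where "E = (\<lambda>t. (p - 1) / p * \<bar>v' t\<bar> powr p + hfun N p K t * F (v t))"
  have Es: "E s = 0" by (simp add: E_def vs v's F0)
  have Econt: "continuous_on {c..d} E" if "0 < c" "d \<le> z" for c d
  proof -
    have sub: "{c..d} \<subseteq> {0..z}" using that by auto
    have c1: "continuous_on {c..d} (\<lambda>t. \<bar>v' t\<bar> powr p)"
      by (rule continuous_on_powr') (use p continuous_on_subset[OF v'c sub] in \<open>auto intro: continuous_intros\<close>)
    have c2: "continuous_on {c..d} (hfun N p K)"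
      by (rule continuous_at_imp_continuous_on) (use that zT hc in auto)
    have c3: "continuous_on {c..d} (\<lambda>t. F (v t))"
      by (rule continuous_on_compose2[OF continuous_at_imp_continuous_on[of UNIV F] continuous_on_subset[OF vcont sub]])
         (use Fc in auto)
    show ?thesis unfolding E_def by (intro continuous_intros c1 c2 c3)
  qed
  have Ederiv: "\<exists>hd<0. (E has_real_derivative hd * F (v t)) (at t)" if t: "0 < t" "t < z" and vt: "v t \<noteq> 0" for t
  proof -
    obtain hd where hd: "(hfun N p K has_real_derivative hd) (at t)" "hd < 0" using hD[of t] t zT by auto
    define g where "g = (\<lambda>s. hfun N p K s * f (v s))"
    have gint: "g integrable_on {0..z}"
      using set_borel_integral_eq_integral(1)[OF phi[of z]] z integrable_on_open_interval_real
      unfolding g_def by auto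
    have Ieq: "\<bar>v' x\<bar> powr (p - 2) * v' x = a powr (p - 1) - integral {0..x} g" if "x \<in> {0..z}" for x
      using phi2[OF that] set_borel_integral_eq_integral(2)[OF phi[OF that]]
      by (simp add: g_def integral_open_interval_real)
    have gc: "isCont g t" unfolding g_def
      by (intro isCont_mult hc isCont_o2[OF DERIV_isCont[OF vdat[OF t]]] fc vt) (use t zT in auto)
    have dI: "((\<lambda>x. integral {0..x} g) has_real_derivative g t) (at t)"
    proof -
      have "((\<lambda>x. integral {0..x} g) has_vector_derivative g t) (at t within ({0..z} - {}))"
        by (rule integral_has_vector_derivative_continuous_at[OF gint])
           (use t gc in \<open>auto intro: continuous_at_imp_continuous_at_within\<close>)
      moreover have "at t within ({0..z} - {}) = at t" using t at_within_Icc_at[of 0 t z] by simp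
      ultimately show ?thesis by (simp add: has_real_derivative_iff_has_vector_derivative)
    qed
    have dphi: "((\<lambda>x. \<bar>v' x\<bar> powr (p - 2) * v' x) has_real_derivative - g t) (at t)"
    proof (rule has_field_derivative_transform_within_open[of "\<lambda>x. a powr (p - 1) - integral {0..x} g" _ _ "{0<..<z}"])
      show "((\<lambda>x. a powr (p - 1) - integral {0..x} g) has_real_derivative - g t) (at t)"
        using DERIV_diff[OF DERIV_const dI] by simp
    qed (use t Ieq in auto)
    define q where "q = p / (p - 1)"
    have q1: "q > 1" using p by (simp add: q_def)
    define \<phi> where "\<phi> = (\<lambda>x. \<bar>v' x\<bar> powr (p - 2) * v' x)"
    have absphi: "\<bar>\<phi> x\<bar> = \<bar>v' x\<bar> powr (p - 1)" for x
    proof (cases "v' x = 0")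
      case True then show ?thesis by (simp add: \<phi>_def)
    next
      case False
      have "\<bar>\<phi> x\<bar> = \<bar>v' x\<bar> * \<bar>v' x\<bar> powr (p - 2)" by (simp add: \<phi>_def abs_mult)
      also have "\<dots> = \<bar>v' x\<bar> powr (1 + (p - 2))" by (intro powr_mult_base) simp
      finally show ?thesis by simp
    qed
    have Wid: "(p - 1) / p * \<bar>\<phi> x\<bar> powr q = (p - 1) / p * \<bar>v' x\<bar> powr p" for x
    proof -
      have "\<bar>\<phi> x\<bar> powr q = \<bar>v' x\<bar> powr ((p - 1) * q)" by (simp add: absphi powr_powr)
      also have "(p - 1) * q = p" using p by (simp add: q_def)
      finally show ?thesis by simp
    qed
    have W'id: "(p - 1) / p * (q * \<bar>\<phi> t\<bar> powr (q - 1) * sgn (\<phi> t)) = v' t"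
    proof (cases "v' t = 0")
      case True then show ?thesis by (simp add: \<phi>_def)
    next
      case False
      have c: "(p - 1) / p * q = 1" using p by (simp add: q_def)
      have "\<bar>\<phi> t\<bar> powr (q - 1) = \<bar>v' t\<bar> powr ((p - 1) * (q - 1))" by (simp add: absphi powr_powr)
      also have "(p - 1) * (q - 1) = 1" using p by (simp add: q_def field_simps)
      finally have A: "\<bar>\<phi> t\<bar> powr (q - 1) = \<bar>v' t\<bar>" using False by simp
      have B: "sgn (\<phi> t) = sgn (v' t)" using False by (simp add: \<phi>_def sgn_mult)
      have "(p - 1) / p * (q * \<bar>\<phi> t\<bar> powr (q - 1) * sgn (\<phi> t)) = ((p - 1) / p * q) * (\<bar>v' t\<bar> * sgn (v' t))"
        using A B by simp
      also have "\<dots> = v' t" using c by (simp add: abs_mult_sgn)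
      finally show ?thesis .
    qed
    have dW: "((\<lambda>y. (p - 1) / p * \<bar>y\<bar> powr q) has_real_derivative (p - 1) / p * (q * \<bar>\<phi> t\<bar> powr (q - 1) * sgn (\<phi> t))) (at (\<phi> t))"
      by (rule DERIV_cmult[OF abs_powr_deriv[OF q1]])
    have d1: "((\<lambda>x. (p - 1) / p * \<bar>v' x\<bar> powr p) has_real_derivative v' t * (- g t)) (at t)"
    proof -
      have "((\<lambda>x. (p - 1) / p * \<bar>\<phi> x\<bar> powr q) has_real_derivative
              (p - 1) / p * (q * \<bar>\<phi> t\<bar> powr (q - 1) * sgn (\<phi> t)) * (- g t)) (at t)"
        using DERIV_chain2[OF dW dphi[folded \<phi>_def]] by simp
      moreover have "(\<lambda>x. (p - 1) / p * \<bar>\<phi> x\<bar> powr q) = (\<lambda>x. (p - 1) / p * \<bar>v' x\<bar> powr p)"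
        by (rule ext) (rule Wid)
      ultimately show ?thesis unfolding W'id by simp
    qed
    have dFv: "((\<lambda>x. F (v x)) has_real_derivative f (v t) * v' t) (at t)"
      using DERIV_chain2[OF Fd[OF vt] vdat[OF t]] .
    have d2: "((\<lambda>x. hfun N p K x * F (v x)) has_real_derivative hd * F (v t) + f (v t) * v' t * hfun N p K t) (at t)"
      using DERIV_mult[OF hd(1) dFv] .
    have D: "(E has_real_derivative v' t * (- g t) + (hd * F (v t) + f (v t) * v' t * hfun N p K t)) (at t)"
      unfolding E_def by (rule DERIV_add[OF d1 d2])
    have eq: "v' t * (- g t) + (hd * F (v t) + f (v t) * v' t * hfun N p K t) = hd * F (v t)"
      by (simp add: g_def algebra_simps)
    from D have "(E has_real_derivative hd * F (v t)) (at t)" unfolding eq .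
    then show ?thesis using hd(2) by blast
  qed
  have E4: "\<exists>c. 0 < c \<and> c < s \<and> E c > 0"
  proof -
    have L1: "((\<lambda>t. (p - 1) / p * \<bar>v' t\<bar> powr p) \<longlongrightarrow> (p - 1) / p * \<bar>v' 0\<bar> powr p) (at_right 0)"
    proof -
      have "(v' \<longlongrightarrow> v' 0) (at 0 within {0..z})"
        using v'c z unfolding continuous_on_def by auto
      then have "(v' \<longlongrightarrow> v' 0) (at_right 0)" using at_within_Icc_at_right[OF z(1)] by simp
      then show ?thesis using v'0 by (intro tendsto_intros) auto
    qed
    obtain M where M: "M > 0" "\<And>t. t \<in> {0..z} \<Longrightarrow> \<bar>v' t\<bar> \<le> M"
    proof -
      have "bounded (v' ` {0..z})" by (intro compact_imp_bounded compact_continuous_image v'c) auto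
      then show ?thesis using that unfolding bounded_pos by auto
    qed
    have vb: "\<bar>v t\<bar> \<le> M * t" if tt: "0 < t" "t \<le> z" for t
    proof -
      have "continuous_on {0..t} v" using continuous_on_subset[OF vcont] tt by auto
      moreover have "v differentiable (at x)" if "0 < x" "x < t" for x
        using vdat[of x] that \<open>t \<le> z\<close> real_differentiable_def by auto
      ultimately obtain L \<xi> where \<xi>: "0 < \<xi>" "\<xi> < t" "(v has_real_derivative L) (at \<xi>)" "v t - v 0 = (t - 0) * L"
        using MVT[OF tt(1)] by blast
      have "L = v' \<xi>" using DERIV_unique[OF \<xi>(3) vdat[of \<xi>]] \<xi> tt by auto
      then have "\<bar>L\<bar> \<le> M" using M(2)[of \<xi>] \<xi> tt by auto
      then show ?thesis using \<xi>(4) v0 tt by (simp add: abs_mult mult.commute mult_left_mono)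
    qed
    define k where "k = Ch * CF * M powr (1 - m)"
    have L2: "((\<lambda>t. hfun N p K t * F (v t)) \<longlongrightarrow> 0) (at_right 0)"
    proof (rule Lim_null_comparison)
      have "((\<lambda>t. k * t powr (e3 + 1 - m)) \<longlongrightarrow> k * 0 powr (e3 + 1 - m)) (at_right 0)"
        using e3m by (intro tendsto_intros) (auto simp: eventually_at_right_less eventually_at_filter)
      then show "((\<lambda>t. k * t powr (e3 + 1 - m)) \<longlongrightarrow> 0) (at_right 0)" by simp
      define b where "b = min z (min T (\<delta>1 / M))"
      have b: "b > 0" using z zT \<delta>1 M by (simp add: b_def)
      show "\<forall>\<^sub>F t in at_right 0. norm (hfun N p K t * F (v t)) \<le> k * t powr (e3 + 1 - m)"
        using eventually_at_right_real[OF b]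
      proof eventually_elim
        case (elim t)
        then have t: "0 < t" "t < z" "t < T" "M * t < \<delta>1" using M(1) by (auto simp: b_def field_simps)
        have vt: "\<bar>v t\<bar> \<le> M * t" using vb[of t] t by simp
        have "norm (hfun N p K t * F (v t)) = hfun N p K t * \<bar>F (v t)\<bar>"
          using hp[of t] t by (simp add: abs_mult)
        also have "\<dots> \<le> (Ch * t powr e3) * (CF * (M * t) powr (1 - m))"
        proof (rule mult_mono)
          show "hfun N p K t \<le> Ch * t powr e3" using hb t by simp
          have "\<bar>F (v t)\<bar> \<le> CF * \<bar>v t\<bar> powr (1 - m)" using Fb[of "v t"] vt t by simp
          also have "\<dots> \<le> CF * (M * t) powr (1 - m)"
            using vt CFpos H2_m by (intro mult_left_mono powr_mono2) auto
          finally show "\<bar>F (v t)\<bar> \<le> CF * (M * t) powr (1 - m)" .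
        qed (use Chpos t in auto)
        also have "\<dots> = k * t powr (e3 + 1 - m)"
          using t M(1) by (simp add: k_def powr_mult powr_add[symmetric] algebra_simps)
        finally show ?case .
      qed
    qed
    have "(E \<longlongrightarrow> (p - 1) / p * \<bar>v' 0\<bar> powr p + 0) (at_right 0)"
      unfolding E_def by (rule tendsto_add[OF L1 L2])
    moreover have "(p - 1) / p * \<bar>v' 0\<bar> powr p > 0" using p v'0 by simp
    ultimately have "\<forall>\<^sub>F t in at_right 0. E t > 0" by (intro order_tendstoD(1)) auto
    moreover have "\<forall>\<^sub>F t in at_right 0. t \<in> {0<..<s}" using spos by (rule eventually_at_right_real)
    ultimately have "\<forall>\<^sub>F t in at_right 0. E t > 0 \<and> t \<in> {0<..<s}" by eventually_elim auto
    then obtain c where "E c > 0 \<and> c \<in> {0<..<s}" using eventually_happens'[of "at_right (0::real)"] by auto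
    then show ?thesis by auto
  qed
  then obtain c0 where c0: "0 < c0" "c0 < s" "E c0 > 0" by blast
  define Bs where "Bs = {t\<in>{c0..s}. F (v t) \<ge> 0 \<and> \<bar>v t\<bar> \<ge> \<beta>}"
  have notBs: "v t = 0 \<or> F (v t) < 0" if "t \<in> {c0..s}" "t \<notin> Bs" for t
  proof (cases "v t = 0")
    case False
    show ?thesis
    proof (cases "\<bar>v t\<bar> \<le> \<beta>")
      case True then show ?thesis using Fneg[OF False] by simp
    next
      case False then show ?thesis using that by (auto simp: Bs_def)
    qed
  qed simp
  have good: "\<exists>c. 0 < c \<and> c < s \<and> E c > 0 \<and> (\<forall>t\<in>{c..s}. v t = 0 \<or> F (v t) < 0)"
  proof (cases "Bs = {}")
    case True
    then show ?thesis using c0 notBs by blast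
  next
    case False
    have sub: "{c0..s} \<subseteq> {0..z}" using c0 sz by auto
    have cFv: "continuous_on {c0..s} (\<lambda>t. F (v t))"
      by (rule continuous_on_compose2[OF continuous_at_imp_continuous_on[of UNIV F] continuous_on_subset[OF vcont sub]])
         (use Fc in auto)
    have cav: "continuous_on {c0..s} (\<lambda>t. \<bar>v t\<bar>)"
      using continuous_on_subset[OF vcont sub] by (intro continuous_intros)
    have Bs_eq: "Bs = ({c0..s} \<inter> (\<lambda>t. F (v t)) -` {0..}) \<inter> ({c0..s} \<inter> (\<lambda>t. \<bar>v t\<bar>) -` {\<beta>..})"
      by (auto simp: Bs_def)
    have clBs: "closed Bs" unfolding Bs_eq
      by (intro closed_Int continuous_closed_preimage cFv cav) auto
    define t0 where "t0 = Sup Bs"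
    have bddBs: "bdd_above Bs" by (rule bdd_aboveI[of _ s]) (auto simp: Bs_def)
    have t0B: "t0 \<in> Bs" unfolding t0_def using closed_contains_Sup[OF False bddBs clBs] .
    then have t0: "c0 \<le> t0" "t0 \<le> s" "F (v t0) \<ge> 0" "\<bar>v t0\<bar> \<ge> \<beta>" by (auto simp: Bs_def)
    have t0s: "t0 < s" using t0 vs \<beta>(1) by (cases "t0 = s") auto
    have after: "v t = 0 \<or> F (v t) < 0" if "t0 < t" "t \<le> s" for t
    proof -
      have "t \<notin> Bs"
      proof
        assume "t \<in> Bs"
        then have "t \<le> t0" unfolding t0_def using bddBs by (rule cSup_upper)
        then show False using that by simp
      qed
      then show ?thesis using notBs[of t] that t0 by auto
    qed
    have vt0: "v t0 \<noteq> 0" using t0 \<beta>(1) by auto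
    have Et0: "E t0 \<ge> 0"
    proof -
      have A: "(p - 1) / p * \<bar>v' t0\<bar> powr p \<ge> 0" using p by simp
      have B: "hfun N p K t0 * F (v t0) \<ge> 0"
        using hp[of t0] t0 c0 t0s sz zT by (intro mult_nonneg_nonneg) auto
      show ?thesis unfolding E_def by (rule add_nonneg_nonneg[OF A B])
    qed
    have t0pos: "0 < t0" "t0 < z" using t0 c0 t0s sz by auto
    obtain \<rho> where \<rho>: "\<rho> > 0" "\<And>x. x \<noteq> t0 \<Longrightarrow> dist x t0 < \<rho> \<Longrightarrow> v x \<noteq> 0"
    proof -
      have "(v \<longlongrightarrow> v t0) (at t0)" using DERIV_isCont[OF vdat[OF t0pos]] by (simp add: isCont_def)
      then have "\<forall>\<^sub>F x in at t0. v x \<noteq> 0" using vt0 by (rule tendsto_imp_eventually_ne)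
      then show ?thesis using that unfolding eventually_at by auto
    qed
    define \<mu> where "\<mu> = min (\<rho> / 2) ((s - t0) / 2)"
    define c where "c = t0 + \<mu>"
    have m1: "\<mu> > 0" using \<rho>(1) t0s by (simp add: \<mu>_def)
    have m2: "\<mu> \<le> (s - t0) / 2" unfolding \<mu>_def by (rule min.cobounded2)
    have m4: "\<mu> \<le> \<rho> / 2" unfolding \<mu>_def by (rule min.cobounded1)
    have m3: "\<mu> < \<rho>" using m4 \<rho>(1) by linarith
    have c1: "t0 < c" unfolding c_def using m1 by linarith
    have c2: "c < s"
    proof -
      have "2 * \<mu> \<le> s - t0" using m2 by simp
      then show ?thesis unfolding c_def using t0s by simp
    qed
    note c = c1 c2
    have "E t0 < E c"
    proof (rule DERIV_pos_imp_increasing_open[OF c(1)])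
      fix x assume x: "t0 < x" "x < c"
      have vx: "v x \<noteq> 0" using \<rho>(2)[of x] x m3 unfolding c_def dist_real_def by auto
      have Fx: "F (v x) < 0" using after[of x] x c vx by auto
      obtain hd where "hd < 0" "(E has_real_derivative hd * F (v x)) (at x)"
        using Ederiv[of x] x c t0pos sz vx by auto
      then show "\<exists>y. (E has_real_derivative y) (at x) \<and> 0 < y" using Fx by (intro exI[of _ "hd * F (v x)"]) (auto simp: mult_neg_neg)
    next
      show "continuous_on {t0..c} E" using Econt[of t0 c] t0pos c sz by auto
    qed
    then have "E c > 0" using Et0 by simp
    moreover have "\<forall>t\<in>{c..s}. v t = 0 \<or> F (v t) < 0" using after c by auto
    ultimately show ?thesis using c t0pos by (intro exI[of _ c]) auto
  qed
  then obtain c where c: "0 < c" "c < s" "E c > 0" and cgood: "\<And>t. t \<in> {c..s} \<Longrightarrow> v t = 0 \<or> F (v t) < 0"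
    by blast
  have mono: "E c \<le> E d" if d: "c \<le> d" "d < s" for d
  proof (rule mono_finite_exc_ex[OF d(1) Econt[OF c(1)]])
    show "d \<le> z" using d sz by simp
    show "finite {x\<in>{c..d}. v x = 0}"
    proof (rule finite_zeros)
      show "continuous_on {c..d} v" using continuous_on_subset[OF vcont] c d sz by auto
      fix x assume "x \<in> {c..d}" "v x = 0"
      then show "\<exists>D. (v has_real_derivative D) (at x) \<and> D \<noteq> 0"
        using vdat[of x] nobad[of x] c d sz by auto
    qed
    fix x assume x: "x \<in> {c<..<d} - {x\<in>{c..d}. v x = 0}"
    then have vx: "v x \<noteq> 0" and xr: "c < x" "x < d" by auto
    have Fx: "F (v x) < 0" using cgood[of x] vx xr d by auto
    obtain hd where "hd < 0" "(E has_real_derivative hd * F (v x)) (at x)"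
      using Ederiv[of x] xr c d sz vx by auto
    then show "\<exists>D. (E has_real_derivative D) (at x) \<and> D \<ge> 0" using Fx
      by (intro exI[of _ "hd * F (v x)"]) (auto simp: mult_nonpos_nonpos)
  qed
  have "E c \<le> E s"
  proof (rule tendsto_lowerbound)
    have "continuous (at s within {c..s}) E" using Econt[of c s] c sz
      by (simp add: continuous_on_eq_continuous_within)
    then show "(E \<longlongrightarrow> E s) (at_left s)" using at_within_Icc_at_left[OF c(2)]
      by (simp add: continuous_within)
    show "\<forall>\<^sub>F x in at_left s. E c \<le> E x"
      using eventually_at_left_real[OF c(2)] by eventually_elim (use mono in auto)
  qed simp
  then show False using Es c by simp
qed

end
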